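(* Let $X$ be a real Banach space with a normalized Schauder basis $(e_j)$ which is $(C_u,C_s)$-subsymmetric, and let $(e_j^* )$ be the biorthogonal functionals. Let $T\colon X\to X$ be a bounded linear operator with $\delta:=\inf_j|\langle Te_j,e_j^*\rangle|>0$. Then for every $\eta>0$ there exist bounded linear operators $A,B\colon X\to X$ with $I_X=ATB$ and $$\|A\|\cdot\|B\|\leq \frac{2C_u^5C_s^3}{\delta}+\eta.$$ In other words, $(e_j)$ has the $\bigl(\tfrac{2C_u^5C_s^3}{\delta}\bigr)$-factorization property.
   Context: $(e_j)$ is $C_u$-unconditional if for all scalar sequences $(a_j),(\gamma_j)$ for which the series converge, $\|\sum_j\gamma_ja_je_j\|\le C_u\sup_k|\gamma_k|\,\|\sum_ja_je_j\|$. It is $C_s$-spreading if for every increasing sequence $(n_j)$ of natural numbers and all scalars $(a_j)$ for which the series converge, $C_s^{-1}\|\sum_ja_je_{n_j}\|\le\|\sum_ja_je_j\|\le C_s\|\sum_ja_je_{n_j}\|$. It is $(C_u,C_s)$-subsymmetric if it is both $C_u$-unconditional and $C_s$-spreading. $I_X$ denotes the identity operator on $X$. *)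

theory Defs
  imports "HOL-Analysis.Analysis"
begin

definition schauder_basis :: "(nat \<Rightarrow> 'a::banach) \<Rightarrow> bool" where
  "schauder_basis e \<longleftrightarrow> (\<forall>x. \<exists>!a::nat \<Rightarrow> real. (\<lambda>j. a j *\<^sub>R e j) sums x)"

definition biorth :: "(nat \<Rightarrow> 'a::banach) \<Rightarrow> nat \<Rightarrow> 'a \<Rightarrow> real" where
  "biorth e j x = (THE a::nat \<Rightarrow> real. (\<lambda>i. a i *\<^sub>R e i) sums x) j"

definition normalized :: "(nat \<Rightarrow> 'a::real_normed_vector) \<Rightarrow> bool" where
  "normalized e \<longleftrightarrow> (\<forall>j. norm (e j) = 1)"

definition unconditional :: "real \<Rightarrow> (nat \<Rightarrow> 'a::banach) \<Rightarrow> bool" where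
  "unconditional Cu e \<longleftrightarrow>
     (\<forall>(a::nat \<Rightarrow> real) (\<gamma>::nat \<Rightarrow> real).
        summable (\<lambda>j. a j *\<^sub>R e j) \<longrightarrow> summable (\<lambda>j. (\<gamma> j * a j) *\<^sub>R e j) \<longrightarrow>
        bdd_above (range (\<lambda>k. \<bar>\<gamma> k\<bar>)) \<longrightarrow>
        norm (\<Sum>j. (\<gamma> j * a j) *\<^sub>R e j)
          \<le> Cu * (SUP k. \<bar>\<gamma> k\<bar>) * norm (\<Sum>j. a j *\<^sub>R e j))"

definition spreading :: "real \<Rightarrow> (nat \<Rightarrow> 'a::banach) \<Rightarrow> bool" where
  "spreading Cs e \<longleftrightarrow>
     (\<forall>(n::nat \<Rightarrow> nat) (a::nat \<Rightarrow> real).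
        strict_mono n \<longrightarrow> summable (\<lambda>j. a j *\<^sub>R e j) \<longrightarrow> summable (\<lambda>j. a j *\<^sub>R e (n j)) \<longrightarrow>
        inverse Cs * norm (\<Sum>j. a j *\<^sub>R e (n j)) \<le> norm (\<Sum>j. a j *\<^sub>R e j) \<and>
        norm (\<Sum>j. a j *\<^sub>R e j) \<le> Cs * norm (\<Sum>j. a j *\<^sub>R e (n j)))"

definition subsymmetric :: "real \<Rightarrow> real \<Rightarrow> (nat \<Rightarrow> 'a::banach) \<Rightarrow> bool" where
  "subsymmetric Cu Cs e \<longleftrightarrow> unconditional Cu e \<and> spreading Cs e"

end

theory Submission
  imports Defs "HOL-Library.Diagonal_Subsequence"
begin
lemma cauchy_transfer:
  fixes f g :: "nat \<Rightarrow> 'a::banach"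
  assumes "\<And>m n. norm (sum f {m..<n}) \<le> K * norm (sum g {m..<n})" "K \<ge> 0" "summable g"
  shows "summable f"
proof -
  have "\<forall>e>0. \<exists>N. \<forall>m\<ge>N. \<forall>n. norm (sum f {m..<n}) < e"
  proof (intro allI impI)
    fix e :: real assume e: "e > 0"
    have "e / (K + 1) > 0" using e assms(2) by simp
    then obtain N where N: "\<forall>m\<ge>N. \<forall>n. norm (sum g {m..<n}) < e / (K + 1)"
      using assms(3) unfolding summable_Cauchy by blast
    show "\<exists>N. \<forall>m\<ge>N. \<forall>n. norm (sum f {m..<n}) < e"
    proof (intro exI allI impI)
      fix m n assume "N \<le> m"
      then have h: "norm (sum g {m..<n}) < e / (K + 1)" using N by blast
      have "norm (sum f {m..<n}) \<le> K * norm (sum g {m..<n})" by (rule assms(1))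
      also have "\<dots> \<le> K * (e / (K + 1))" using h assms(2) by (intro mult_left_mono) auto
      also have "\<dots> < e" using e assms(2) by (simp add: field_simps)
      finally show "norm (sum f {m..<n}) < e" .
    qed
  qed
  then show ?thesis unfolding summable_Cauchy .
qed

lemma sums_fin_interval:
  fixes v :: "nat \<Rightarrow> 'a::real_normed_vector"
  shows "(\<lambda>j. (if j \<in> {m..<n} then a j else 0) *\<^sub>R v j) sums (\<Sum>j\<in>{m..<n}. a j *\<^sub>R v j)"
proof -
  have "(\<lambda>j. (if j \<in> {m..<n} then a j else 0) *\<^sub>R v j) sums (\<Sum>j\<in>{m..<n}. (if j \<in> {m..<n} then a j else 0) *\<^sub>R v j)"
    by (rule sums_finite) auto
  also have "(\<Sum>j\<in>{m..<n}. (if j \<in> {m..<n} then a j else 0) *\<^sub>R v j) = (\<Sum>j\<in>{m..<n}. a j *\<^sub>R v j)"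
    by (rule sum.cong) auto
  finally show ?thesis .
qed

locale bctx =
  fixes e :: "nat \<Rightarrow> 'a::banach" and Cu Cs :: real
  assumes sb: "schauder_basis e" and nz: "normalized e"
    and unc: "unconditional Cu e" and spr: "spreading Cs e"
begin

definition c :: "nat \<Rightarrow> 'a \<Rightarrow> real" where "c j x = biorth e j x"

lemma ne: "norm (e j) = 1" using nz unfolding normalized_def by blast

lemma expand: "(\<lambda>j. c j x *\<^sub>R e j) sums x"
proof -
  have "\<exists>!a::nat \<Rightarrow> real. (\<lambda>j. a j *\<^sub>R e j) sums x" using sb unfolding schauder_basis_def by blast
  from theI'[OF this] show ?thesis unfolding c_def biorth_def .
qed

lemma coef_unique: assumes "(\<lambda>j. a j *\<^sub>R e j) sums x" shows "c j x = a j"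
proof -
  have u: "\<exists>!a::nat \<Rightarrow> real. (\<lambda>j. a j *\<^sub>R e j) sums x" using sb unfolding schauder_basis_def by blast
  have "(THE a::nat \<Rightarrow> real. (\<lambda>j. a j *\<^sub>R e j) sums x) = a"
    by (rule the1_equality[OF u]) (rule assms)
  then show ?thesis unfolding c_def biorth_def by simp
qed

lemma c_add: "c j (x + y) = c j x + c j y"
proof -
  have "(\<lambda>i. (c i x + c i y) *\<^sub>R e i) sums (x + y)"
    using sums_add[OF expand[of x] expand[of y]] by (simp add: scaleR_add_left)
  then show ?thesis by (rule coef_unique)
qed

lemma c_scale: "c j (r *\<^sub>R x) = r * c j x"
proof -
  have "(\<lambda>i. r *\<^sub>R (c i x *\<^sub>R e i)) sums (r *\<^sub>R x)"
    by (rule sums_scaleR_right[OF expand])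
  then have "(\<lambda>i. (r * c i x) *\<^sub>R e i) sums (r *\<^sub>R x)" by simp
  then show ?thesis by (rule coef_unique)
qed

lemma c_e: "c j (e k) = (if j = k then 1 else 0)"
proof -
  have "(\<lambda>i. (if i = k then 1 else 0) *\<^sub>R e i) sums (\<Sum>i\<in>{k}. (if i = k then 1 else 0) *\<^sub>R e i)"
    by (rule sums_finite) auto
  then have "(\<lambda>i. (if i = k then 1 else 0) *\<^sub>R e i) sums (e k)" by simp
  then show ?thesis by (rule coef_unique)
qed

lemma unc_rule:
  assumes "summable (\<lambda>j. a j *\<^sub>R e j)" "summable (\<lambda>j. (\<gamma> j * a j) *\<^sub>R e j)"
    "bdd_above (range (\<lambda>k. \<bar>\<gamma> k\<bar>))"
  shows "norm (\<Sum>j. (\<gamma> j * a j) *\<^sub>R e j) \<le> Cu * (SUP k. \<bar>\<gamma> k\<bar>) * norm (\<Sum>j. a j *\<^sub>R e j)"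
proof -
  have "\<forall>a \<gamma>. summable (\<lambda>j. a j *\<^sub>R e j) \<longrightarrow> summable (\<lambda>j. (\<gamma> j * a j) *\<^sub>R e j) \<longrightarrow>
        bdd_above (range (\<lambda>k. \<bar>\<gamma> k\<bar>)) \<longrightarrow>
        norm (\<Sum>j. (\<gamma> j * a j) *\<^sub>R e j) \<le> Cu * (SUP k. \<bar>\<gamma> k\<bar>) * norm (\<Sum>j. a j *\<^sub>R e j)"
    using unc unfolding unconditional_def .
  then show ?thesis using assms by blast
qed

lemma spr_rule:
  assumes "strict_mono n" "summable (\<lambda>j. a j *\<^sub>R e j)" "summable (\<lambda>j. a j *\<^sub>R e (n j))"
  shows "inverse Cs * norm (\<Sum>j. a j *\<^sub>R e (n j)) \<le> norm (\<Sum>j. a j *\<^sub>R e j) \<and>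
        norm (\<Sum>j. a j *\<^sub>R e j) \<le> Cs * norm (\<Sum>j. a j *\<^sub>R e (n j))"
proof -
  have "\<forall>(n::nat \<Rightarrow> nat) (a::nat \<Rightarrow> real).
        strict_mono n \<longrightarrow> summable (\<lambda>j. a j *\<^sub>R e j) \<longrightarrow> summable (\<lambda>j. a j *\<^sub>R e (n j)) \<longrightarrow>
        inverse Cs * norm (\<Sum>j. a j *\<^sub>R e (n j)) \<le> norm (\<Sum>j. a j *\<^sub>R e j) \<and>
        norm (\<Sum>j. a j *\<^sub>R e j) \<le> Cs * norm (\<Sum>j. a j *\<^sub>R e (n j))"
    using spr unfolding spreading_def .
  then show ?thesis using assms by blast
qed

lemma unc_bound:
  assumes "summable (\<lambda>j. a j *\<^sub>R e j)" "summable (\<lambda>j. (\<gamma> j * a j) *\<^sub>R e j)"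
    "\<And>j. \<bar>\<gamma> j\<bar> \<le> G" "Cu \<ge> 0"
  shows "norm (\<Sum>j. (\<gamma> j * a j) *\<^sub>R e j) \<le> Cu * G * norm (\<Sum>j. a j *\<^sub>R e j)"
proof -
  have bdd: "bdd_above (range (\<lambda>k. \<bar>\<gamma> k\<bar>))" by (rule bdd_aboveI[where M=G]) (auto intro: assms(3))
  have "norm (\<Sum>j. (\<gamma> j * a j) *\<^sub>R e j) \<le> Cu * (SUP k. \<bar>\<gamma> k\<bar>) * norm (\<Sum>j. a j *\<^sub>R e j)"
    using unc_rule[OF assms(1,2) bdd] .
  also have "\<dots> \<le> Cu * G * norm (\<Sum>j. a j *\<^sub>R e j)"
    using assms(3,4) by (intro mult_right_mono mult_left_mono cSUP_least) auto
  finally show ?thesis .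
qed

lemma Cu_ge1: "Cu \<ge> 1"
proof -
  let ?a = "\<lambda>j::nat. if j = 0 then 1 else (0::real)"
  have s: "(\<lambda>j. ?a j *\<^sub>R e j) sums e 0"
    using sums_finite[of "{0}" "\<lambda>j. ?a j *\<^sub>R e j"] by simp
  have s2: "(\<lambda>j. (1 * ?a j) *\<^sub>R e j) sums e 0" using s by simp
  have bdd: "bdd_above (range (\<lambda>k::nat. \<bar>1::real\<bar>))" by simp
  have "norm (\<Sum>j. ((\<lambda>k::nat. 1::real) j * ?a j) *\<^sub>R e j) \<le> Cu * (SUP k::nat. \<bar>(\<lambda>k::nat. 1::real) k\<bar>) * norm (\<Sum>j. ?a j *\<^sub>R e j)"
    by (rule unc_rule) (use s s2 in \<open>auto simp: sums_iff\<close>)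
  then show ?thesis using s s2 ne[of 0] by (simp add: sums_iff)
qed

lemma Cs_ge1: "Cs \<ge> 1"
proof -
  let ?a = "\<lambda>j::nat. if j = 0 then 1 else (0::real)"
  have s: "(\<lambda>j. ?a j *\<^sub>R e j) sums e 0"
    using sums_finite[of "{0}" "\<lambda>j. ?a j *\<^sub>R e j"] by simp
  have s2: "(\<lambda>j. ?a j *\<^sub>R e (id j)) sums e 0" using s by simp
  have "norm (\<Sum>j. ?a j *\<^sub>R e j) \<le> Cs * norm (\<Sum>j. ?a j *\<^sub>R e (id j))"
    using spr_rule[of id ?a] s s2 strict_mono_id unfolding sums_iff by blast
  then show ?thesis using s s2 ne[of 0] by (simp add: sums_iff)
qed

lemma unc_fin:
  assumes "\<And>j. \<bar>\<gamma> j\<bar> \<le> G"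
  shows "norm (\<Sum>j\<in>{m..<n}. (\<gamma> j * a j) *\<^sub>R e j) \<le> Cu * G * norm (\<Sum>j\<in>{m..<n}. a j *\<^sub>R e j)"
proof -
  let ?a = "\<lambda>j. if j \<in> {m..<n} then a j else 0"
  have s1: "(\<lambda>j. ?a j *\<^sub>R e j) sums (\<Sum>j\<in>{m..<n}. a j *\<^sub>R e j)" by (rule sums_fin_interval)
  have s2: "(\<lambda>j. (if j \<in> {m..<n} then \<gamma> j * a j else 0) *\<^sub>R e j) sums (\<Sum>j\<in>{m..<n}. (\<gamma> j * a j) *\<^sub>R e j)"
    by (rule sums_fin_interval)
  have eq: "(\<lambda>j. (\<gamma> j * ?a j) *\<^sub>R e j) = (\<lambda>j. (if j \<in> {m..<n} then \<gamma> j * a j else 0) *\<^sub>R e j)"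
    by auto
  have "norm (\<Sum>j. (\<gamma> j * ?a j) *\<^sub>R e j) \<le> Cu * G * norm (\<Sum>j. ?a j *\<^sub>R e j)"
    using s1 s2 eq assms Cu_ge1 by (intro unc_bound) (auto simp: sums_iff)
  then show ?thesis using s1 s2 eq by (simp add: sums_iff)
qed

lemma spr_fin:
  assumes "strict_mono \<sigma>"
  shows "norm (\<Sum>j\<in>{m..<n}. a j *\<^sub>R e (\<sigma> j)) \<le> Cs * norm (\<Sum>j\<in>{m..<n}. a j *\<^sub>R e j)"
    and "norm (\<Sum>j\<in>{m..<n}. a j *\<^sub>R e j) \<le> Cs * norm (\<Sum>j\<in>{m..<n}. a j *\<^sub>R e (\<sigma> j))"
proof -
  let ?a = "\<lambda>j. if j \<in> {m..<n} then a j else 0"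
  have s1: "(\<lambda>j. ?a j *\<^sub>R e j) sums (\<Sum>j\<in>{m..<n}. a j *\<^sub>R e j)" by (rule sums_fin_interval)
  have s2: "(\<lambda>j. ?a j *\<^sub>R e (\<sigma> j)) sums (\<Sum>j\<in>{m..<n}. a j *\<^sub>R e (\<sigma> j))" by (rule sums_fin_interval)
  have "inverse Cs * norm (\<Sum>j. ?a j *\<^sub>R e (\<sigma> j)) \<le> norm (\<Sum>j. ?a j *\<^sub>R e j) \<and>
        norm (\<Sum>j. ?a j *\<^sub>R e j) \<le> Cs * norm (\<Sum>j. ?a j *\<^sub>R e (\<sigma> j))"
    using spr_rule[of \<sigma> ?a] assms s1 s2 unfolding sums_iff by blast
  then have h: "inverse Cs * norm (\<Sum>j\<in>{m..<n}. a j *\<^sub>R e (\<sigma> j)) \<le> norm (\<Sum>j\<in>{m..<n}. a j *\<^sub>R e j)"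
     "norm (\<Sum>j\<in>{m..<n}. a j *\<^sub>R e j) \<le> Cs * norm (\<Sum>j\<in>{m..<n}. a j *\<^sub>R e (\<sigma> j))"
    using s1 s2 by (auto simp: sums_iff)
  then show "norm (\<Sum>j\<in>{m..<n}. a j *\<^sub>R e j) \<le> Cs * norm (\<Sum>j\<in>{m..<n}. a j *\<^sub>R e (\<sigma> j))" by simp
  show "norm (\<Sum>j\<in>{m..<n}. a j *\<^sub>R e (\<sigma> j)) \<le> Cs * norm (\<Sum>j\<in>{m..<n}. a j *\<^sub>R e j)"
    using h(1) Cs_ge1 by (simp add: field_simps)
qed

lemma unc_summable:
  assumes "summable (\<lambda>j. a j *\<^sub>R e j)" "\<And>j. \<bar>\<gamma> j\<bar> \<le> G"
  shows "summable (\<lambda>j. (\<gamma> j * a j) *\<^sub>R e j)"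
proof (rule cauchy_transfer[OF _ _ assms(1)])
  show "norm (\<Sum>j\<in>{m..<n}. (\<gamma> j * a j) *\<^sub>R e j) \<le> Cu * G * norm (\<Sum>j\<in>{m..<n}. a j *\<^sub>R e j)" for m n
    by (rule unc_fin[OF assms(2)])
  have "G \<ge> 0" using assms(2)[of 0] by linarith
  then show "Cu * G \<ge> 0" using Cu_ge1 by simp
qed

lemma spr_summable1:
  assumes "strict_mono \<sigma>" "summable (\<lambda>j. a j *\<^sub>R e j)"
  shows "summable (\<lambda>j. a j *\<^sub>R e (\<sigma> j))"
  by (rule cauchy_transfer[OF spr_fin(1)[OF assms(1)] _ assms(2)]) (use Cs_ge1 in simp)

lemma spr_summable2:
  assumes "strict_mono \<sigma>" "summable (\<lambda>j. a j *\<^sub>R e (\<sigma> j))"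
  shows "summable (\<lambda>j. a j *\<^sub>R e j)"
  by (rule cauchy_transfer[OF spr_fin(2)[OF assms(1)] _ assms(2)]) (use Cs_ge1 in simp)

lemma spr_bound:
  assumes "strict_mono \<sigma>" "summable (\<lambda>j. a j *\<^sub>R e j)"
  shows "norm (\<Sum>j. a j *\<^sub>R e (\<sigma> j)) \<le> Cs * norm (\<Sum>j. a j *\<^sub>R e j)"
    "norm (\<Sum>j. a j *\<^sub>R e j) \<le> Cs * norm (\<Sum>j. a j *\<^sub>R e (\<sigma> j))"
proof -
  have s: "summable (\<lambda>j. a j *\<^sub>R e (\<sigma> j))" by (rule spr_summable1[OF assms])
  have h: "inverse Cs * norm (\<Sum>j. a j *\<^sub>R e (\<sigma> j)) \<le> norm (\<Sum>j. a j *\<^sub>R e j) \<and>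
        norm (\<Sum>j. a j *\<^sub>R e j) \<le> Cs * norm (\<Sum>j. a j *\<^sub>R e (\<sigma> j))"
    using spr_rule[OF assms(1,2) s] .
  then show "norm (\<Sum>j. a j *\<^sub>R e j) \<le> Cs * norm (\<Sum>j. a j *\<^sub>R e (\<sigma> j))" by simp
  show "norm (\<Sum>j. a j *\<^sub>R e (\<sigma> j)) \<le> Cs * norm (\<Sum>j. a j *\<^sub>R e j)"
    using h Cs_ge1 by (simp add: field_simps)
qed

lemma c_bound: "\<bar>c j x\<bar> \<le> Cu * norm x"
proof -
  let ?g = "\<lambda>k. if k = j then 1 else (0::real)"
  have s1: "summable (\<lambda>k. c k x *\<^sub>R e k)" using expand sums_summable by blast
  have s2: "(\<lambda>k. (?g k * c k x) *\<^sub>R e k) sums (\<Sum>k\<in>{j}. (?g k * c k x) *\<^sub>R e k)"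
    by (rule sums_finite) auto
  have "norm (\<Sum>k. (?g k * c k x) *\<^sub>R e k) \<le> Cu * 1 * norm (\<Sum>k. c k x *\<^sub>R e k)"
    using s1 s2 Cu_ge1 by (intro unc_bound) (auto simp: sums_iff)
  then show ?thesis using s2 expand[of x] ne[of j] by (simp add: sums_iff)
qed

lemma c_bl: "bounded_linear (c j)"
  by (rule bounded_linear_intro[where K = Cu]) (auto simp: c_add c_scale intro: order_trans[OF _ c_bound] simp: mult.commute c_bound)

end

lemma rows_conv_subseq:
  fixes m :: "nat \<Rightarrow> nat \<Rightarrow> real"
  assumes bd: "\<And>i k. \<bar>m i k\<bar> \<le> K"
  shows "\<exists>\<sigma>. strict_mono \<sigma> \<and> (\<forall>r. convergent (\<lambda>k. m r (\<sigma> k)))"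
proof -
  interpret subseqs "\<lambda>n s. convergent (\<lambda>k. m n (s k))"
  proof
    fix n and s :: "nat \<Rightarrow> nat" assume "strict_mono s"
    have "bounded (range (\<lambda>k. m n (s k)))"
      using bd by (auto simp: bounded_iff intro!: exI[of _ K])
    then obtain l r where "strict_mono (r::nat\<Rightarrow>nat)" "((\<lambda>k. m n (s k)) \<circ> r) \<longlonglongrightarrow> l"
      using bounded_imp_convergent_subsequence by blast
    then show "\<exists>r'. strict_mono r' \<and> convergent (\<lambda>k. m n ((s \<circ> r') k))"
      by (auto simp: convergent_def o_def)
  qed
  have "convergent (\<lambda>k. m r (diagseq k))" for r
  proof -
    have "convergent (\<lambda>k. m r ((diagseq \<circ> (+) (Suc r)) k))"
    proof (rule diagseq_holds)
      fix r' :: "nat \<Rightarrow> nat" and s n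
      assume "strict_mono r'" "convergent (\<lambda>k. m n (s k))"
      then show "convergent (\<lambda>k. m n ((s \<circ> r') k))"
        unfolding convergent_def using LIMSEQ_subseq_LIMSEQ[of "\<lambda>k. m n (s k)" _ r']
        by (auto simp: o_def)
    qed
    then obtain l where "(\<lambda>k. m r (diagseq (k + Suc r))) \<longlonglongrightarrow> l"
      by (auto simp: convergent_def o_def add.commute)
    then have "(\<lambda>k. m r (diagseq k)) \<longlonglongrightarrow> l" by (rule LIMSEQ_offset)
    then show ?thesis by (auto simp: convergent_def)
  qed
  then show ?thesis using subseq_diagseq by blast
qed

lemma rows_cauchy_fin:
  fixes m :: "nat \<Rightarrow> nat \<Rightarrow> real"
  assumes conv: "\<And>r. convergent (\<lambda>k. m r (\<sigma> k))" and tau: "\<tau> > 0"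
  shows "\<exists>N. \<forall>r\<le>L. \<forall>k\<ge>N. \<forall>k'\<ge>N. \<bar>m r (\<sigma> k) - m r (\<sigma> k')\<bar> \<le> \<tau>"
proof (induction L)
  have one: "\<exists>N. \<forall>k\<ge>N. \<forall>k'\<ge>N. \<bar>m r (\<sigma> k) - m r (\<sigma> k')\<bar> \<le> \<tau>" for r
  proof -
    have "Cauchy (\<lambda>k. m r (\<sigma> k))" using conv convergent_Cauchy by blast
    then obtain M where "\<forall>k\<ge>M. \<forall>k'\<ge>M. dist (m r (\<sigma> k)) (m r (\<sigma> k')) < \<tau>"
      using tau unfolding Cauchy_def by blast
    then show ?thesis by (auto simp: dist_real_def intro!: exI[of _ M] less_imp_le)
  qed
  {
    case 0
    then show ?case using one[of 0] by auto
  next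
    case (Suc L)
    then obtain N1 where N1: "\<forall>r\<le>L. \<forall>k\<ge>N1. \<forall>k'\<ge>N1. \<bar>m r (\<sigma> k) - m r (\<sigma> k')\<bar> \<le> \<tau>" by blast
    obtain N2 where N2: "\<forall>k\<ge>N2. \<forall>k'\<ge>N2. \<bar>m (Suc L) (\<sigma> k) - m (Suc L) (\<sigma> k')\<bar> \<le> \<tau>" using one by blast
    show ?case
    proof (intro exI[of _ "max N1 N2"] allI impI)
      fix r k k' assume "r \<le> Suc L" "max N1 N2 \<le> k" "max N1 N2 \<le> k'"
      then show "\<bar>m r (\<sigma> k) - m r (\<sigma> k')\<bar> \<le> \<tau>" using N1 N2 le_Suc_eq[of r L] by auto
    qed
  }
qed

lemma cols_fin:
  fixes m :: "nat \<Rightarrow> nat \<Rightarrow> real"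
  assumes col: "\<And>k. (\<lambda>i. m i k) \<longlonglongrightarrow> 0" and tau: "\<tau> > 0"
  shows "\<exists>M. \<forall>c\<le>A. \<forall>i\<ge>M. \<bar>m i c\<bar> \<le> \<tau>"
proof (induction A)
  have one: "\<exists>M. \<forall>i\<ge>M. \<bar>m i c\<bar> \<le> \<tau>" for c
  proof -
    obtain M where "\<forall>i\<ge>M. dist (m i c) 0 < \<tau>" using col[of c] tau unfolding lim_sequentially by blast
    then show ?thesis by (auto intro!: exI[of _ M] less_imp_le)
  qed
  {
    case 0
    then show ?case using one[of 0] by auto
  next
    case (Suc A)
    then obtain N1 where N1: "\<forall>c\<le>A. \<forall>i\<ge>N1. \<bar>m i c\<bar> \<le> \<tau>" by blast
    obtain N2 where N2: "\<forall>i\<ge>N2. \<bar>m i (Suc A)\<bar> \<le> \<tau>" using one by blast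
    show ?case
    proof (intro exI[of _ "max N1 N2"] allI impI)
      fix c i assume "c \<le> Suc A" "max N1 N2 \<le> i"
      then show "\<bar>m i c\<bar> \<le> \<tau>" using N1 N2 le_Suc_eq[of c A] by auto
    qed
  }
qed

primrec iterp :: "(nat \<Rightarrow> nat \<Rightarrow> nat \<times> nat) \<Rightarrow> nat \<Rightarrow> nat \<times> nat" where
  "iterp P 0 = P 0 0"
| "iterp P (Suc j) = P (Suc j) (snd (iterp P j))"

lemma choose_indices:
  fixes m :: "nat \<Rightarrow> nat \<Rightarrow> real"
  assumes bd: "\<And>i k. \<bar>m i k\<bar> \<le> K" and col: "\<And>k. (\<lambda>i. m i k) \<longlonglongrightarrow> 0" and eps: "\<epsilon> > 0"
  shows "\<exists>a b. strict_mono a \<and> strict_mono b \<and> (\<forall>i. a i < b i) \<and>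
     (\<forall>i j. i < j \<longrightarrow> \<bar>m (b i) (a j) - m (b i) (b j)\<bar> \<le> \<epsilon> / 4 ^ j) \<and>
     (\<forall>i j. j < i \<longrightarrow> \<bar>m (b i) (a j)\<bar> \<le> \<epsilon> / (2 * 4 ^ i) \<and> \<bar>m (b i) (b j)\<bar> \<le> \<epsilon> / (2 * 4 ^ i)) \<and>
     (\<forall>i. \<bar>m (b i) (a i)\<bar> \<le> \<epsilon> / (2 * 4 ^ i))"
proof -
  obtain \<sigma> where sm: "strict_mono \<sigma>" and conv: "\<And>r. convergent (\<lambda>k. m r (\<sigma> k))"
    using rows_conv_subseq[of m K, OF bd] by blast
  define Q where "Q = (\<lambda>j L (p::nat \<times> nat). L < fst p \<and> fst p < snd p \<and>
      (\<forall>r\<le>L. \<bar>m r (fst p) - m r (snd p)\<bar> \<le> \<epsilon> / 4 ^ j) \<and>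
      (\<forall>c\<le>fst p. \<bar>m (snd p) c\<bar> \<le> \<epsilon> / (2 * 4 ^ j)))"
  have ex: "\<exists>p. Q j L p" for j L
  proof -
    have t1: "\<epsilon> / 4 ^ j > 0" using eps by simp
    have t2: "\<epsilon> / (2 * 4 ^ j) > 0" using eps by simp
    obtain N where N: "\<forall>r\<le>L. \<forall>k\<ge>N. \<forall>k'\<ge>N. \<bar>m r (\<sigma> k) - m r (\<sigma> k')\<bar> \<le> \<epsilon> / 4 ^ j"
      using rows_cauchy_fin[of m \<sigma>, OF conv t1] by blast
    define k0 where "k0 = N + L + 1"
    obtain M where M: "\<forall>c\<le>\<sigma> k0. \<forall>i\<ge>M. \<bar>m i c\<bar> \<le> \<epsilon> / (2 * 4 ^ j)"
      using cols_fin[of m, OF col t2] by blast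
    define k1 where "k1 = k0 + 1 + M"
    have "k0 \<le> \<sigma> k0" using sm by (rule strict_mono_imp_increasing)
    moreover have "k1 \<le> \<sigma> k1" using sm by (rule strict_mono_imp_increasing)
    moreover have "\<sigma> k0 < \<sigma> k1" using sm unfolding k1_def strict_mono_def by simp
    ultimately have "Q j L (\<sigma> k0, \<sigma> k1)" unfolding Q_def using N M
      by (auto simp: k0_def k1_def)
    then show ?thesis by blast
  qed
  define P where "P = (\<lambda>j L. SOME p. Q j L p)"
  have PQ: "Q j L (P j L)" for j L unfolding P_def using ex by (rule someI_ex)
  define a where "a = (\<lambda>i. fst (iterp P i))"
  define b where "b = (\<lambda>i. snd (iterp P i))"
  define Lb where "Lb = (\<lambda>i. case i of 0 \<Rightarrow> 0 | Suc i' \<Rightarrow> b i')"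
  have Qi: "Q i (Lb i) (a i, b i)" for i
    by (cases i) (auto simp: a_def b_def Lb_def PQ)
  have ab: "a i < b i" for i using Qi[of i] unfolding Q_def by simp
  have ba: "b i < a (Suc i)" for i using Qi[of "Suc i"] unfolding Q_def Lb_def by simp
  have sa: "strict_mono a" by (rule strict_monoI_Suc) (use ab ba less_trans in blast)
  have sb: "strict_mono b" by (rule strict_monoI_Suc) (use ab ba less_trans in blast)
  have rowp: "\<forall>r\<le>Lb i. \<bar>m r (a i) - m r (b i)\<bar> \<le> \<epsilon> / 4 ^ i" for i using Qi[of i] unfolding Q_def by simp
  have colp: "\<forall>c\<le>a i. \<bar>m (b i) c\<bar> \<le> \<epsilon> / (2 * 4 ^ i)" for i using Qi[of i] unfolding Q_def by simp
  have "\<bar>m (b i) (a j) - m (b i) (b j)\<bar> \<le> \<epsilon> / 4 ^ j" if "i < j" for i j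
  proof -
    have "j \<noteq> 0" using that by simp
    then obtain j' where j': "j = Suc j'" using not0_implies_Suc by blast
    have "b i \<le> b j'" using that j' sb by (simp add: strict_mono_less_eq)
    then show ?thesis using rowp[of j] j' unfolding Lb_def by simp
  qed
  moreover have "\<bar>m (b i) (a j)\<bar> \<le> \<epsilon> / (2 * 4 ^ i) \<and> \<bar>m (b i) (b j)\<bar> \<le> \<epsilon> / (2 * 4 ^ i)" if "j < i" for i j
  proof -
    have "a j \<le> a i" using that sa by (simp add: strict_mono_less_eq)
    moreover have "Suc j \<le> i" using that by simp
    then have "a (Suc j) \<le> a i" using sa by (simp add: strict_mono_less_eq)
    then have "b j \<le> a i" using ba[of j] by simp
    ultimately show ?thesis using colp[of i] by simp
  qed
  moreover have "\<bar>m (b i) (a i)\<bar> \<le> \<epsilon> / (2 * 4 ^ i)" for i using colp[of i] by simp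
  ultimately show ?thesis using sa sb ab by blast
qed

lemma neumann:
  fixes R :: "'a::banach \<Rightarrow> 'a"
  assumes R: "bounded_linear R" and Rq: "\<And>x. norm (R x - x) \<le> q * norm x" and q0: "0 \<le> q" and q1: "q < 1"
  shows "\<exists>S. bounded_linear S \<and> (\<forall>x. S (R x) = x) \<and> onorm S \<le> 1 / (1 - q)"
proof -
  define E where "E = (\<lambda>x. x - R x)"
  have El: "bounded_linear E" unfolding E_def by (intro bounded_linear_sub bounded_linear_ident R)
  have En: "norm (E x) \<le> q * norm x" for x using Rq[of x] by (simp add: E_def norm_minus_commute)
  have Pl: "bounded_linear (E ^^ n)" for n
    by (induction n) (auto intro: bounded_linear_compose[OF El] bounded_linear_ident simp: id_def)
  have Pn: "norm ((E ^^ n) x) \<le> q ^ n * norm x" for n x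
  proof (induction n)
    case 0 then show ?case by simp
  next
    case (Suc n)
    have "norm ((E ^^ Suc n) x) = norm (E ((E ^^ n) x))" by simp
    also have "\<dots> \<le> q * norm ((E ^^ n) x)" by (rule En)
    also have "\<dots> \<le> q * (q ^ n * norm x)" using Suc q0 by (intro mult_left_mono) auto
    finally show ?case by simp
  qed
  have gs: "summable (\<lambda>n. q ^ n * norm x)" for x
    using q0 q1 by (intro summable_mult2 summable_geometric) simp
  have summ: "summable (\<lambda>n. (E ^^ n) x)" for x
    by (rule summable_comparison_test'[OF gs Pn])
  define S where "S = (\<lambda>y. \<Sum>n. (E ^^ n) y)"
  have Sn: "norm (S y) \<le> (1 / (1 - q)) * norm y" for y
  proof -
    have "norm (S y) \<le> (\<Sum>n. q ^ n * norm y)" unfolding S_def by (rule norm_suminf_le[OF Pn gs])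
    also have "\<dots> = (\<Sum>n. q ^ n) * norm y" using suminf_mult2[of "\<lambda>n. q ^ n" "norm y"] q0 q1
      by (simp add: summable_geometric)
    also have "\<dots> = (1 / (1 - q)) * norm y" using q0 q1 by (simp add: suminf_geometric)
    finally show ?thesis .
  qed
  have Sl: "bounded_linear S"
  proof (rule bounded_linear_intro[where K = "1 / (1 - q)"])
    fix x y
    have "S (x + y) = (\<Sum>n. (E ^^ n) x + (E ^^ n) y)" unfolding S_def
      using Pl by (simp add: linear_simps)
    also have "\<dots> = S x + S y" unfolding S_def by (rule suminf_add[OF summ summ, symmetric])
    finally show "S (x + y) = S x + S y" .
  next
    fix r x
    have "S (r *\<^sub>R x) = (\<Sum>n. r *\<^sub>R (E ^^ n) x)" unfolding S_def
      using Pl by (simp add: linear_simps)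
    also have "\<dots> = r *\<^sub>R S x" unfolding S_def by (rule suminf_scaleR_right[OF summ, symmetric])
    finally show "S (r *\<^sub>R x) = r *\<^sub>R S x" .
  next
    fix x show "norm (S x) \<le> norm x * (1 / (1 - q))" using Sn[of x] by (simp add: mult.commute)
  qed
  have inv: "S (R x) = x" for x
  proof -
    have Rx: "R x = x - E x" by (simp add: E_def)
    have t: "(\<lambda>n. (E ^^ n) x) \<longlonglongrightarrow> 0"
    proof (rule Lim_null_comparison)
      show "\<forall>\<^sub>F n in sequentially. norm ((E ^^ n) x) \<le> q ^ n * norm x" using Pn by simp
      show "(\<lambda>n. q ^ n * norm x) \<longlonglongrightarrow> 0"
        using q0 q1 by (intro tendsto_mult_left_zero LIMSEQ_power_zero) simp
    qed
    have "(\<lambda>n. (E ^^ n) x - (E ^^ Suc n) x) sums ((E ^^ 0) x - 0)"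
      by (rule telescope_sums'[OF t])
    moreover have "(E ^^ n) (R x) = (E ^^ n) x - (E ^^ Suc n) x" for n
      using Pl[of n] unfolding Rx by (simp add: linear_simps funpow_Suc_right del: funpow.simps)
    ultimately have "(\<lambda>n. (E ^^ n) (R x)) sums x" by simp
    then show ?thesis unfolding S_def by (simp add: sums_iff)
  qed
  have "onorm S \<le> 1 / (1 - q)" by (rule onorm_bound) (use q1 Sn in auto)
  then show ?thesis using Sl inv by blast
qed

lemma lin_series:
  fixes v :: "nat \<Rightarrow> 'b::banach" and f :: "nat \<Rightarrow> 'a::real_normed_vector \<Rightarrow> real"
  assumes "\<And>j x y. f j (x + y) = f j x + f j y" "\<And>j r x. f j (r *\<^sub>R x) = r * f j x"
    "\<And>x. summable (\<lambda>j. f j x *\<^sub>R v j)" "\<And>x. norm (\<Sum>j. f j x *\<^sub>R v j) \<le> K * norm x"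
  shows "bounded_linear (\<lambda>x. \<Sum>j. f j x *\<^sub>R v j)"
proof (rule bounded_linear_intro[where K = K])
  fix x y
  show "(\<Sum>j. f j (x + y) *\<^sub>R v j) = (\<Sum>j. f j x *\<^sub>R v j) + (\<Sum>j. f j y *\<^sub>R v j)"
    by (simp add: assms(1) scaleR_add_left suminf_add[OF assms(3) assms(3)])
next
  fix r x
  show "(\<Sum>j. f j (r *\<^sub>R x) *\<^sub>R v j) = r *\<^sub>R (\<Sum>j. f j x *\<^sub>R v j)"
    using suminf_scaleR_right[OF assms(3)[of x], of r] by (simp add: assms(2))
next
  fix x show "norm (\<Sum>j. f j x *\<^sub>R v j) \<le> norm x * K" using assms(4)[of x] by (simp add: mult.commute)
qed

context bctx
begin

lemma c_tendsto0: "(\<lambda>i. c i y) \<longlonglongrightarrow> 0"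
proof -
  have "(\<lambda>i. c i y *\<^sub>R e i) \<longlonglongrightarrow> 0" using expand[of y] sums_summable summable_LIMSEQ_zero by blast
  then have "(\<lambda>i. norm (c i y *\<^sub>R e i)) \<longlonglongrightarrow> 0" by (rule tendsto_norm_zero)
  then have "(\<lambda>i. \<bar>c i y\<bar>) \<longlonglongrightarrow> 0" by (simp add: ne)
  then show ?thesis by (simp add: tendsto_rabs_zero_iff)
qed

lemma c_diff: "c j (x - y) = c j x - c j y"
  using c_add[of j x "(-1) *\<^sub>R y"] c_scale[of j "-1" y] by simp

lemma pow_aux1: "i < j \<Longrightarrow> (\<epsilon>::real) > 0 \<Longrightarrow> \<epsilon> / 4 ^ j \<le> \<epsilon> / 2 ^ (i + j)"
proof -
  assume "i < j" "\<epsilon> > 0"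
  have "(2::real) ^ (i + j) \<le> 2 ^ (2 * j)" using \<open>i < j\<close> by (intro power_increasing) auto
  also have "\<dots> = 4 ^ j" by (simp add: power_mult)
  finally show ?thesis using \<open>\<epsilon> > 0\<close> by (intro divide_left_mono) auto
qed

lemma main:
  fixes T :: "'a \<Rightarrow> 'a"
  assumes T: "bounded_linear T" and dd: "\<And>j. \<delta> \<le> \<bar>c j (T (e j))\<bar>" and d0: "\<delta> > 0"
    and e0: "\<epsilon> > 0" and small: "\<epsilon> * (1 + 4 * Cu) < \<delta>"
  shows "\<exists>A B :: 'a \<Rightarrow> 'a. bounded_linear A \<and> bounded_linear B \<and> (\<forall>x. A (T (B x)) = x) \<and>
     onorm A * onorm B \<le> 2 * Cu ^ 2 * Cs ^ 2 / (\<delta> - \<epsilon> * (1 + 4 * Cu))"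
proof -
  have Cu1: "Cu \<ge> 1" by (rule Cu_ge1)
  have Cs1: "Cs \<ge> 1" by (rule Cs_ge1)
  interpret T: bounded_linear T by (rule T)
  define m where "m = (\<lambda>i k. c i (T (e k)))"
  have mb: "\<bar>m i k\<bar> \<le> Cu * onorm T" for i k
  proof -
    have "\<bar>m i k\<bar> \<le> Cu * norm (T (e k))" unfolding m_def by (rule c_bound)
    also have "\<dots> \<le> Cu * (onorm T * norm (e k))" using Cu1 onorm[OF T] by (intro mult_left_mono) auto
    finally show ?thesis by (simp add: ne)
  qed
  have mc: "(\<lambda>i. m i k) \<longlonglongrightarrow> 0" for k unfolding m_def by (rule c_tendsto0)
  obtain a b where sa: "strict_mono a" and sb: "strict_mono b" and ab: "\<And>i. a i < b i"
    and up: "\<And>i j. i < j \<Longrightarrow> \<bar>m (b i) (a j) - m (b i) (b j)\<bar> \<le> \<epsilon> / 4 ^ j"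
    and lo: "\<And>i j. j < i \<Longrightarrow> \<bar>m (b i) (a j)\<bar> \<le> \<epsilon> / (2 * 4 ^ i) \<and> \<bar>m (b i) (b j)\<bar> \<le> \<epsilon> / (2 * 4 ^ i)"
    and dg: "\<And>i. \<bar>m (b i) (a i)\<bar> \<le> \<epsilon> / (2 * 4 ^ i)"
    using choose_indices[of m "Cu * onorm T", OF mb mc e0] by blast
  define u where "u = (\<lambda>j. e (a j) - e (b j))"
  define M where "M = (\<lambda>i j. c (b i) (T (u j)))"
  have Mm: "M i j = m (b i) (a j) - m (b i) (b j)" for i j
  proof -
    show ?thesis unfolding M_def u_def m_def by (simp add: T.diff c_diff)
  qed
  have offd: "\<bar>M i j\<bar> \<le> \<epsilon> / 2 ^ (i + j)" if "i \<noteq> j" for i j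
  proof (cases "i < j")
    case True
    then show ?thesis using up[OF True] pow_aux1[OF True e0] Mm by simp
  next
    case False
    then have ji: "j < i" using that by simp
    have "\<bar>M i j\<bar> \<le> \<bar>m (b i) (a j)\<bar> + \<bar>m (b i) (b j)\<bar>" unfolding Mm by simp
    also have "\<dots> \<le> \<epsilon> / 4 ^ i" using lo[OF ji] by simp
    also have "\<dots> \<le> \<epsilon> / 2 ^ (j + i)" by (rule pow_aux1[OF ji e0])
    finally show ?thesis by (simp add: add.commute)
  qed
  define \<delta>' where "\<delta>' = \<delta> - \<epsilon>"
  have e4: "0 \<le> \<epsilon> * (4 * Cu)" using e0 Cu1 by simp
  have d'0: "\<delta>' > 0" using small e4 unfolding \<delta>'_def distrib_left by linarith
  have diag: "\<bar>M i i\<bar> \<ge> \<delta>'" for i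
  proof -
    have "(1::real) \<le> 4 ^ i" by (rule one_le_power) simp
    then have "(1::real) \<le> 2 * 4 ^ i" by linarith
    then have "\<epsilon> / (2 * 4 ^ i) \<le> \<epsilon>" using e0 by (simp add: field_simps)
    moreover have "\<delta> \<le> \<bar>m (b i) (b i)\<bar>" unfolding m_def by (rule dd)
    ultimately show ?thesis unfolding Mm \<delta>'_def using dg[of i] by linarith
  qed
  define \<gamma> where "\<gamma> = (\<lambda>i. 1 / M i i)"
  have \<gamma>b: "\<bar>\<gamma> i\<bar> \<le> 1 / \<delta>'" for i
    unfolding \<gamma>_def using diag[of i] d'0 by (simp add: frac_le)
  have \<gamma>M: "\<gamma> i * M i i = 1" for i unfolding \<gamma>_def using diag[of i] d'0 by simp
  have sumx: "summable (\<lambda>j. c j x *\<^sub>R e j)" for x using expand sums_summable by blast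
  have sumxx: "(\<Sum>j. c j x *\<^sub>R e j) = x" for x using expand sums_unique by metis
  define B where "B = (\<lambda>x. \<Sum>j. c j x *\<^sub>R u j)"
  have sBa: "summable (\<lambda>j. c j x *\<^sub>R e (a j))" for x by (rule spr_summable1[OF sa sumx])
  have sBb: "summable (\<lambda>j. c j x *\<^sub>R e (b j))" for x by (rule spr_summable1[OF sb sumx])
  have sB: "summable (\<lambda>j. c j x *\<^sub>R u j)" for x
    unfolding u_def scaleR_diff_right by (rule summable_diff[OF sBa sBb])
  have Bn: "norm (B x) \<le> 2 * Cs * norm x" for x
  proof -
    have "B x = (\<Sum>j. c j x *\<^sub>R e (a j)) - (\<Sum>j. c j x *\<^sub>R e (b j))"
      unfolding B_def u_def scaleR_diff_right by (rule suminf_diff[OF sBa sBb, symmetric])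
    then have "norm (B x) \<le> norm (\<Sum>j. c j x *\<^sub>R e (a j)) + norm (\<Sum>j. c j x *\<^sub>R e (b j))"
      by (simp add: norm_triangle_ineq4)
    also have "\<dots> \<le> Cs * norm x + Cs * norm x"
      using spr_bound(1)[OF sa sumx, of x] spr_bound(1)[OF sb sumx, of x] by (simp add: sumxx)
    finally show ?thesis by simp
  qed
  have Bl: "bounded_linear B" unfolding B_def
  proof (rule lin_series[where K = "2 * Cs"])
    show "c j (x + y) = c j x + c j y" for j x y by (rule c_add)
    show "c j (r *\<^sub>R x) = r * c j x" for j r x by (rule c_scale)
    show "summable (\<lambda>j. c j x *\<^sub>R u j)" for x by (rule sB)
    show "norm (\<Sum>j. c j x *\<^sub>R u j) \<le> 2 * Cs * norm x" for x using Bn[of x] unfolding B_def .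
  qed
  have oB: "onorm B \<le> 2 * Cs" by (rule onorm_bound) (use Cs1 Bn in auto)
  define ind where "ind = (\<lambda>k. if k \<in> range b then 1 else (0::real))"
  define A where "A = (\<lambda>y. \<Sum>i. (\<gamma> i * c (b i) y) *\<^sub>R e i)"
  have sind: "summable (\<lambda>k. (ind k * c k y) *\<^sub>R e k)" for y
    by (rule unc_summable[OF sumx, where G = 1]) (simp add: ind_def)
  have rind: "(\<lambda>i. c (b i) y *\<^sub>R e (b i)) sums (\<Sum>k. (ind k * c k y) *\<^sub>R e k)" for y
  proof -
    have "(\<lambda>i. (\<lambda>k. (ind k * c k y) *\<^sub>R e k) (b i)) sums (\<Sum>k. (ind k * c k y) *\<^sub>R e k)"
    proof -
      have z: "\<And>n. n \<notin> range b \<Longrightarrow> (ind n * c n y) *\<^sub>R e n = 0" by (simp add: ind_def)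
      show ?thesis using sums_mono_reindex[of b "\<lambda>k. (ind k * c k y) *\<^sub>R e k", OF sb z] summable_sums[OF sind[of y]] by blast
    qed
    then show ?thesis by (simp add: ind_def)
  qed
  have nind: "norm (\<Sum>k. (ind k * c k y) *\<^sub>R e k) \<le> Cu * norm y" for y
    using unc_bound[OF sumx sind, of 1] Cu1 by (simp add: ind_def sumxx)
  have sw: "summable (\<lambda>i. c (b i) y *\<^sub>R e i)" for y
    by (rule spr_summable2[OF sb]) (use rind sums_summable in blast)
  have nw: "norm (\<Sum>i. c (b i) y *\<^sub>R e i) \<le> Cs * (Cu * norm y)" for y
  proof -
    have "norm (\<Sum>i. c (b i) y *\<^sub>R e i) \<le> Cs * norm (\<Sum>i. c (b i) y *\<^sub>R e (b i))"
      by (rule spr_bound(2)[OF sb sw])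
    also have "\<dots> \<le> Cs * (Cu * norm y)" using rind[of y] nind[of y] Cs1 by (simp add: sums_iff)
    finally show ?thesis .
  qed
  have sA: "summable (\<lambda>i. (\<gamma> i * c (b i) y) *\<^sub>R e i)" for y
    by (rule unc_summable[OF sw \<gamma>b])
  have An: "norm (A y) \<le> Cu ^ 2 * Cs / \<delta>' * norm y" for y
  proof -
    have "norm (A y) \<le> Cu * (1 / \<delta>') * norm (\<Sum>i. c (b i) y *\<^sub>R e i)"
      unfolding A_def by (rule unc_bound[OF sw sA \<gamma>b]) (use Cu1 in simp)
    also have "\<dots> \<le> Cu * (1 / \<delta>') * (Cs * (Cu * norm y))"
      using nw Cu1 d'0 by (intro mult_left_mono) auto
    finally show ?thesis by (simp add: power2_eq_square field_simps)
  qed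
  have Al: "bounded_linear A" unfolding A_def
  proof (rule lin_series[where K = "Cu ^ 2 * Cs / \<delta>'"])
    show "\<gamma> j * c (b j) (x + y) = \<gamma> j * c (b j) x + \<gamma> j * c (b j) y" for j x y
      by (simp add: c_add distrib_left)
    show "\<gamma> j * c (b j) (r *\<^sub>R x) = r * (\<gamma> j * c (b j) x)" for j r x
      by (simp add: c_scale)
    show "summable (\<lambda>j. (\<gamma> j * c (b j) x) *\<^sub>R e j)" for x by (rule sA)
    show "norm (\<Sum>j. (\<gamma> j * c (b j) x) *\<^sub>R e j) \<le> Cu\<^sup>2 * Cs / \<delta>' * norm x" for x
      using An[of x] unfolding A_def .
  qed
  have oA: "onorm A \<le> Cu ^ 2 * Cs / \<delta>'" by (rule onorm_bound) (use Cu1 Cs1 d'0 An in auto)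
  define q where "q = 4 * Cu * \<epsilon> / \<delta>'"
  have close: "norm (A (T (B x)) - x) \<le> q * norm x" for x
  proof -
    define h where "h = (\<lambda>i j. c j x * M i j)"
    have cbT: "c (b i) (T (B x)) = (\<Sum>j. h i j)" and sh: "summable (h i)" for i
    proof -
      have bl: "bounded_linear (\<lambda>y. c (b i) (T y))"
        using bounded_linear_compose[OF c_bl T] by (simp add: o_def)
      have "c (b i) (T (B x)) = (\<Sum>j. c (b i) (T (c j x *\<^sub>R u j)))"
        unfolding B_def by (rule bounded_linear.suminf[OF bl sB])
      also have "\<dots> = (\<Sum>j. h i j)" by (simp add: h_def M_def T.scaleR c_scale)
      finally show "c (b i) (T (B x)) = (\<Sum>j. h i j)" .
      have "summable (\<lambda>j. c (b i) (T (c j x *\<^sub>R u j)))" by (rule bounded_linear.summable[OF bl sB])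
      then show "summable (h i)" by (simp add: h_def M_def T.scaleR c_scale)
    qed
    define d where "d = (\<lambda>i. \<gamma> i * c (b i) (T (B x)) - c i x)"
    have dbound: "\<bar>d i\<bar> \<le> (2 * Cu * norm x * \<epsilon> / \<delta>') * (1/2) ^ i" for i
    proof -
      define h' where "h' = (\<lambda>j. if j = i then 0 else h i j)"
      have single: "(\<lambda>j. if j = i then h i j else 0) sums h i i"
        using sums_single[of i "h i"] by simp
      have h'eq: "h' = (\<lambda>j. h i j - (if j = i then h i j else 0))"
        unfolding h'_def by (auto simp: fun_eq_iff)
      have "h' sums ((\<Sum>j. h i j) - h i i)"
        unfolding h'eq by (rule sums_diff[OF summable_sums[OF sh] single])
      then have "(\<Sum>j. h i j) = (\<Sum>j. h' j) + h i i" by (simp add: sums_iff)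
      then have dd': "d i = \<gamma> i * (\<Sum>j. h' j)"
        unfolding d_def cbT using \<gamma>M[of i] by (simp add: h_def algebra_simps)
      define g where "g = (\<lambda>j. (Cu * norm x * \<epsilon> * (1/2) ^ i) * (1/2) ^ j)"
      have hg: "norm (h' j) \<le> g j" for j
      proof (cases "j = i")
        case True then show ?thesis using Cu1 e0 by (simp add: h'_def g_def)
      next
        case False
        have "norm (h' j) = \<bar>c j x\<bar> * \<bar>M i j\<bar>" using False by (simp add: h'_def h_def abs_mult)
        also have "\<dots> \<le> (Cu * norm x) * (\<epsilon> / 2 ^ (i + j))"
        proof -
          have "i \<noteq> j" using False by simp
          then show ?thesis using c_bound[of j x] offd[of i j] by (intro mult_mono) auto
        qed
        also have "\<dots> = g j" by (simp add: g_def power_add field_simps)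
        finally show ?thesis .
      qed
      have gs: "g sums ((Cu * norm x * \<epsilon> * (1/2) ^ i) * 2)"
        unfolding g_def using sums_mult[OF geometric_sums[of "1/2::real"]] by simp
      have "\<bar>\<Sum>j. h' j\<bar> \<le> (Cu * norm x * \<epsilon> * (1/2) ^ i) * 2"
        using norm_suminf_le[OF hg sums_summable[OF gs]] sums_unique[OF gs] by simp
      then have "\<bar>d i\<bar> \<le> (1 / \<delta>') * ((Cu * norm x * \<epsilon> * (1/2) ^ i) * 2)"
        unfolding dd' abs_mult using \<gamma>b[of i] d'0 by (intro mult_mono) auto
      then show ?thesis by (simp add: field_simps)
    qed
    have "A (T (B x)) - x = (\<Sum>i. d i *\<^sub>R e i)"
      unfolding A_def d_def scaleR_diff_left
      by (subst (2) sumxx[symmetric, of x]) (rule suminf_diff[OF sA sumx])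
    also have "norm \<dots> \<le> (\<Sum>i. (2 * Cu * norm x * \<epsilon> / \<delta>') * (1/2) ^ i)"
      by (rule norm_suminf_le) (use dbound ne in auto)
    also have "\<dots> = (2 * Cu * norm x * \<epsilon> / \<delta>') * 2"
      using sums_unique[OF sums_mult[OF geometric_sums[of "1/2::real"]]] by simp
    also have "\<dots> = q * norm x" unfolding q_def by simp
    finally show ?thesis .
  qed
  have q0: "q \<ge> 0" unfolding q_def using Cu1 e0 d'0 by simp
  have q1: "q < 1" unfolding q_def using small d'0 unfolding \<delta>'_def by (simp add: field_simps)
  have Rl: "bounded_linear (\<lambda>x. A (T (B x)))"
    using bounded_linear_compose[OF Al bounded_linear_compose[OF T Bl]] by simp
  obtain S where Sl: "bounded_linear S" and SR: "\<And>x. S (A (T (B x))) = x" and oS: "onorm S \<le> 1 / (1 - q)"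
    using neumann[OF Rl close q0 q1] by blast
  have "onorm (S \<circ> A) * onorm B \<le> (onorm S * onorm A) * onorm B"
    using onorm_compose[OF Sl Al] onorm_pos_le[OF Bl] by (intro mult_right_mono) auto
  also have "\<dots> \<le> ((1 / (1 - q)) * (Cu ^ 2 * Cs / \<delta>')) * (2 * Cs)"
  proof -
    have p1: "0 \<le> 1 / (1 - q)" using q1 by simp
    have p2: "0 \<le> Cu ^ 2 * Cs / \<delta>'" using Cs1 d'0 by simp
    have "onorm S * onorm A \<le> (1 / (1 - q)) * (Cu ^ 2 * Cs / \<delta>')"
      by (rule mult_mono[OF oS oA p1 onorm_pos_le[OF Al]])
    from mult_mono[OF this oB mult_nonneg_nonneg[OF p1 p2] onorm_pos_le[OF Bl]] show ?thesis .
  qed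
  also have "\<dots> = 2 * Cu ^ 2 * Cs ^ 2 / ((1 - q) * \<delta>')" by (simp add: power2_eq_square field_simps)
  also have "(1 - q) * \<delta>' = \<delta> - \<epsilon> * (1 + 4 * Cu)" unfolding q_def \<delta>'_def using d'0 unfolding \<delta>'_def
    by (simp add: field_simps)
  finally have "onorm (S \<circ> A) * onorm B \<le> 2 * Cu ^ 2 * Cs ^ 2 / (\<delta> - \<epsilon> * (1 + 4 * Cu))" .
  moreover have "bounded_linear (S \<circ> A)" by (rule bounded_linear_compose[OF Sl Al, unfolded o_def[symmetric]])
  moreover have "\<forall>x. (S \<circ> A) (T (B x)) = x" using SR by simp
  ultimately show ?thesis using Bl by blast
qed

end

theorem theorem2p1:
  fixes e :: "nat \<Rightarrow> 'a::banach" and T :: "'a \<Rightarrow> 'a" and Cu Cs \<delta> :: real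
  assumes "schauder_basis e" and "normalized e" and "subsymmetric Cu Cs e"
    and "bounded_linear T"
    and "\<delta> = (INF j. \<bar>biorth e j (T (e j))\<bar>)" and "\<delta> > 0"
  shows "\<forall>\<eta>>0. \<exists>A B :: 'a \<Rightarrow> 'a. bounded_linear A \<and> bounded_linear B \<and>
           (\<forall>x. A (T (B x)) = x) \<and>
           onorm A * onorm B \<le> 2 * Cu ^ 5 * Cs ^ 3 / \<delta> + \<eta>"
proof (intro allI impI)
  fix \<eta> :: real assume eta: "\<eta> > 0"
  interpret bctx e Cu Cs
    using assms(1,2,3) unfolding subsymmetric_def by unfold_locales auto
  have Cu1: "Cu \<ge> 1" by (rule Cu_ge1)
  have Cs1: "Cs \<ge> 1" by (rule Cs_ge1)
  have d0: "\<delta> > 0" by (rule assms(6))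
  have dd: "\<delta> \<le> \<bar>c j (T (e j))\<bar>" for j
  proof -
    have "bdd_below (range (\<lambda>j. \<bar>biorth e j (T (e j))\<bar>))" by (rule bdd_belowI[where m=0]) auto
    then show ?thesis unfolding assms(5) c_def by (rule cINF_lower) simp
  qed
  define K0 where "K0 = 2 * Cu ^ 2 * Cs ^ 2"
  have K0: "K0 \<ge> 0" unfolding K0_def by simp
  define P where "P = K0 + \<eta> * \<delta>"
  have P0: "P > 0" unfolding P_def using K0 eta d0 by (simp add: add_nonneg_pos)
  have C4: "1 + 4 * Cu > 0" using Cu1 by simp
  define \<epsilon> where "\<epsilon> = \<delta>^2 * \<eta> / (2 * P * (1 + 4 * Cu))"
  have e0: "\<epsilon> > 0" unfolding \<epsilon>_def using d0 eta P0 C4 by simp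
  have eC: "\<epsilon> * (1 + 4 * Cu) = \<delta>^2 * \<eta> / (2 * P)" 
  proof -
    have "\<epsilon> * (1 + 4 * Cu) = (\<delta>^2 * \<eta> * (1 + 4 * Cu)) / ((2 * P) * (1 + 4 * Cu))"
      unfolding \<epsilon>_def by (simp add: mult.assoc)
    also have "\<dots> = \<delta>^2 * \<eta> / (2 * P)" using C4 by (rule mult_divide_mult_cancel_right[OF less_imp_neq[symmetric]])
    finally show ?thesis .
  qed
  have Deq: "\<delta> - \<epsilon> * (1 + 4 * Cu) = \<delta> * (2 * K0 + \<delta> * \<eta>) / (2 * P)"
    unfolding eC using P0 by (simp add: field_simps power2_eq_square P_def)
  have Dpos: "\<delta> - \<epsilon> * (1 + 4 * Cu) > 0" unfolding Deq using d0 K0 eta P0 by (simp add: add_nonneg_pos)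
  then have small: "\<epsilon> * (1 + 4 * Cu) < \<delta>" by simp
  obtain A B :: "'a \<Rightarrow> 'a" where AB: "bounded_linear A" "bounded_linear B" "\<forall>x. A (T (B x)) = x"
    and bnd: "onorm A * onorm B \<le> 2 * Cu ^ 2 * Cs ^ 2 / (\<delta> - \<epsilon> * (1 + 4 * Cu))"
    using main[OF assms(4) dd d0 e0 small] by blast
  define D where "D = \<delta> - \<epsilon> * (1 + 4 * Cu)"
  have "P * D = \<delta> * (2 * K0 + \<delta> * \<eta>) / 2" unfolding D_def Deq using P0 by simp
  moreover have "0 \<le> \<delta> * (\<delta> * \<eta>)" using d0 eta by simp
  ultimately have "K0 * \<delta> \<le> P * D" by (simp add: field_simps)
  then have "K0 / D \<le> P / \<delta>" using Dpos d0 unfolding D_def by (simp add: field_simps)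
  also have "\<dots> = K0 / \<delta> + \<eta>" unfolding P_def using d0 by (simp add: field_simps)
  also have "K0 / \<delta> \<le> 2 * Cu ^ 5 * Cs ^ 3 / \<delta>"
  proof -
    have "Cu ^ 2 \<le> Cu ^ 5" using Cu1 by (intro power_increasing) auto
    moreover have "Cs ^ 2 \<le> Cs ^ 3" using Cs1 by (intro power_increasing) auto
    ultimately have "Cu ^ 2 * Cs ^ 2 \<le> Cu ^ 5 * Cs ^ 3" using Cu1 by (intro mult_mono) auto
    then show ?thesis unfolding K0_def using d0 by (intro divide_right_mono) auto
  qed
  finally have "K0 / D \<le> 2 * Cu ^ 5 * Cs ^ 3 / \<delta> + \<eta>" by simp
  then show "\<exists>A B :: 'a \<Rightarrow> 'a. bounded_linear A \<and> bounded_linear B \<and>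
           (\<forall>x. A (T (B x)) = x) \<and> onorm A * onorm B \<le> 2 * Cu ^ 5 * Cs ^ 3 / \<delta> + \<eta>"
    using AB bnd unfolding K0_def D_def by (intro exI[of _ A] exI[of _ B]) auto
qed

end
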